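(* Let $\Phi$ be a unit norm tight frame in $\mathbb{R}^d$ with $K$ atoms, frame constant $A=K/d$ and coherence $\mu$, and let $1\le S\le K$. Let $c\in\mathbb{R}^K$ with $c_1\ge c_2\ge\dots\ge c_K\ge0$ and $\|c\|_2=1$, let $x=c_{p,\sigma}$ with probability $(2^KK!)^{-1}$ for every permutation $p$ and sign sequence $\sigma$, and let $y=\Phi x$. Suppose that for all $\sigma,p$, $$\|P_{I_p}(\Phi)\Phi c_{p,\sigma}\|_2>\max_{|I|\le S,\ I\ne I_p}\|P_I(\Phi)\Phi c_{p,\sigma}\|_2,\qquad I_p:=p^{-1}(\{1,\dots,S\}).$$ Then $\Phi$ is a local maximum of $$\max_{\Psi\in\mathcal D}\ \mathbb{E}_y\Big(\max_{|I|\le S}\|P_I(\Psi)y\|_2^2\Big).$$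
   Context: $\mathcal D$ is the set of dictionaries $\Psi=(\psi_1,\dots,\psi_K)$, $\psi_i\in\mathbb{R}^d$, $\|\psi_i\|_2=1$. For $I\subseteq\{1,\dots,K\}$, $\Psi_I$ is the submatrix with columns $(\psi_i)_{i\in I}$ and $P_I(\Psi)=\Psi_I\Psi_I^\dagger$ is the orthogonal projection onto the span of $(\psi_i)_{i\in I}$ ($\dagger$ = Moore–Penrose pseudoinverse). Unit norm tight frame with frame constant $A$: $\sum_i|\langle\phi_i,v\rangle|^2=A\|v\|_2^2$ for all $v$; coherence $\mu=\max_{i\ne j}|\langle\phi_i,\phi_j\rangle|$. $c_{p,\sigma}(i)=\sigma_ic_{p(i)}$. *)

theory Defs
  imports "HOL-Analysis.Analysis" "HOL-Combinatorics.Permutations"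
begin

definition is_dict :: "nat \<Rightarrow> (nat \<Rightarrow> real^'d) \<Rightarrow> bool" where
  "is_dict K \<Psi> \<longleftrightarrow> (\<forall>i\<in>{1..K}. norm (\<Psi> i) = 1)"

definition proj_span :: "(real^'d) set \<Rightarrow> real^'d \<Rightarrow> real^'d" where
  "proj_span B v = (THE p. p \<in> span B \<and> (\<forall>w\<in>span B. inner (v - p) w = 0))"

definition P :: "nat set \<Rightarrow> (nat \<Rightarrow> real^'d) \<Rightarrow> real^'d \<Rightarrow> real^'d" where
  "P I \<Psi> v = proj_span (\<Psi> ` I) v"

definition synth :: "nat \<Rightarrow> (nat \<Rightarrow> real^'d) \<Rightarrow> (nat \<Rightarrow> real) \<Rightarrow> real^'d" where
  "synth K \<Psi> x = (\<Sum>i=1..K. x i *\<^sub>R \<Psi> i)"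

definition unit_norm_tight_frame :: "nat \<Rightarrow> (nat \<Rightarrow> real^'d) \<Rightarrow> real \<Rightarrow> bool" where
  "unit_norm_tight_frame K \<Phi> A \<longleftrightarrow> is_dict K \<Phi> \<and>
     (\<forall>v. (\<Sum>i=1..K. (inner (\<Phi> i) v)\<^sup>2) = A * (norm v)\<^sup>2)"

definition c_ps :: "(nat \<Rightarrow> real) \<Rightarrow> (nat \<Rightarrow> nat) \<Rightarrow> (nat \<Rightarrow> real) \<Rightarrow> nat \<Rightarrow> real" where
  "c_ps c p \<sigma> i = \<sigma> i * c (p i)"

definition perms :: "nat \<Rightarrow> (nat \<Rightarrow> nat) set" where
  "perms K = {p. p permutes {1..K}}"

definition signs :: "nat \<Rightarrow> (nat \<Rightarrow> real) set" where
  "signs K = PiE {1..K} (\<lambda>_. {-1, 1})"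

definition objective :: "nat \<Rightarrow> nat \<Rightarrow> (nat \<Rightarrow> real^'d) \<Rightarrow> (nat \<Rightarrow> real) \<Rightarrow> (nat \<Rightarrow> real^'d) \<Rightarrow> real" where
  "objective K S \<Phi> c \<Psi> =
     (1 / (2 ^ K * fact K)) *
     (\<Sum>p\<in>perms K. \<Sum>\<sigma>\<in>signs K.
        Max {(norm (P I \<Psi> (synth K \<Phi> (c_ps c p \<sigma>))))\<^sup>2 | I. I \<subseteq> {1..K} \<and> card I \<le> S})"

definition local_max_on_dicts :: "nat \<Rightarrow> ((nat \<Rightarrow> real^'d) \<Rightarrow> real) \<Rightarrow> (nat \<Rightarrow> real^'d) \<Rightarrow> bool" where
  "local_max_on_dicts K F \<Phi> \<longleftrightarrow> is_dict K \<Phi> \<and>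
     (\<exists>\<epsilon>>0. \<forall>\<Psi>. is_dict K \<Psi> \<and> (\<forall>i\<in>{1..K}. norm (\<Psi> i - \<Phi> i) < \<epsilon>) \<longrightarrow> F \<Psi> \<le> F \<Phi>)"

end

theory Submission
  imports Defs
begin


lemma proj_unique:
  fixes V :: "(real^'d) set"
  assumes "p \<in> span V" "\<forall>w\<in>span V. inner (v - p) w = 0"
  shows "proj_span V v = p"
  unfolding proj_span_def
proof (rule the_equality)
  show "p \<in> span V \<and> (\<forall>w\<in>span V. inner (v - p) w = 0)" using assms by auto
next
  fix q assume q: "q \<in> span V \<and> (\<forall>w\<in>span V. inner (v - q) w = 0)"
  have d: "p - q \<in> span V" using assms q by (simp add: span_diff)
  have "inner (p - q) (p - q) = inner (v - q) (p - q) - inner (v - p) (p - q)"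
    by (simp add: inner_diff_left)
  also have "\<dots> = 0" using d assms q by auto
  finally show "q = p" by simp
qed

lemma proj_basis_aux:
  fixes V :: "(real^'d) set"
  shows "\<exists>B. finite B \<and> span B = span V \<and> pairwise orthogonal B \<and> (\<forall>u\<in>B. norm u = 1) \<and>
    card B = dim V \<and> (\<forall>v. proj_span V v = (\<Sum>u\<in>B. inner v u *\<^sub>R u)) \<and>
    (\<forall>v. proj_span V v \<in> span V \<and> (\<forall>w\<in>span V. inner (v - proj_span V v) w = 0))"
proof -
  obtain B where B: "B \<subseteq> span V" "pairwise orthogonal B" "\<And>x. x \<in> B \<Longrightarrow> norm x = 1"
    "independent B" "card B = dim (span V)" "span B = span V"
    using orthonormal_basis_subspace[OF subspace_span[of V]] by metis
  have fin: "finite B" using B(4) independent_imp_finite by blast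
  have uu: "inner u u' = (if u = u' then 1 else 0)" if "u \<in> B" "u' \<in> B" for u u'
  proof (cases "u = u'")
    case True then show ?thesis using B(3)[OF that(1)] by (simp add: dot_square_norm)
  next
    case False then show ?thesis using B(2) that unfolding pairwise_def orthogonal_def by auto
  qed
  have ch: "(\<Sum>u\<in>B. inner v u *\<^sub>R u) \<in> span V \<and> (\<forall>w\<in>span V. inner (v - (\<Sum>u\<in>B. inner v u *\<^sub>R u)) w = 0)" for v
  proof
    show "(\<Sum>u\<in>B. inner v u *\<^sub>R u) \<in> span V"
      using B(1) by (intro span_sum span_mul) auto
    have o: "inner (v - (\<Sum>u\<in>B. inner v u *\<^sub>R u)) u' = 0" if "u' \<in> B" for u'
    proof -
      have "inner (\<Sum>u\<in>B. inner v u *\<^sub>R u) u' = (\<Sum>u\<in>B. inner v u * (if u = u' then 1 else 0))"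
        by (simp add: inner_sum_left uu that)
      also have "\<dots> = inner v u'" using fin that by (simp add: if_distrib cong: if_cong)
      finally show ?thesis by (simp add: inner_diff_left)
    qed
    show "\<forall>w\<in>span V. inner (v - (\<Sum>u\<in>B. inner v u *\<^sub>R u)) w = 0"
    proof
      fix w assume "w \<in> span V"
      then have "w \<in> span B" using B(6) by simp
      then have "orthogonal (v - (\<Sum>u\<in>B. inner v u *\<^sub>R u)) w"
        by (rule orthogonal_to_span) (use o in \<open>auto simp: orthogonal_def\<close>)
      then show "inner (v - (\<Sum>u\<in>B. inner v u *\<^sub>R u)) w = 0" by (simp add: orthogonal_def)
    qed
  qed
  have pr: "proj_span V v = (\<Sum>u\<in>B. inner v u *\<^sub>R u)" for v
    using ch[of v] by (intro proj_unique) auto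
  show ?thesis
    apply (rule exI[of _ B])
    using fin B(2,3,5,6) pr ch by simp
qed

lemma proj_basis:
  fixes V :: "(real^'d) set"
  obtains B where "finite B" "span B = span V" "pairwise orthogonal B" "\<And>u. u\<in>B \<Longrightarrow> norm u = 1"
    "card B = dim V" "\<And>v. proj_span V v = (\<Sum>u\<in>B. inner v u *\<^sub>R u)"
proof -
  from proj_basis_aux[of V] obtain B where B: "finite B" "span B = span V" "pairwise orthogonal B" "(\<forall>u\<in>B. norm u = 1)"
    "card B = dim V" "(\<forall>v. proj_span V v = (\<Sum>u\<in>B. inner v u *\<^sub>R u))"
    by blast
  show ?thesis by (rule that[OF B(1-3) _ B(5)]) (use B(4,6) in auto)
qed

lemma proj_props:
  fixes V :: "(real^'d) set"
  shows "proj_span V v \<in> span V" "\<And>w. w\<in>span V \<Longrightarrow> inner (v - proj_span V v) w = 0"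
  using proj_basis_aux[of V] by (metis, metis)

lemma proj_inner: "w \<in> span V \<Longrightarrow> inner v w = inner (proj_span V v) w"
  using proj_props(2)[of w V v] by (simp add: inner_diff_left)

lemma proj_id: "(v::real^'d) \<in> span V \<Longrightarrow> proj_span V v = v"
  by (rule proj_unique) auto

lemma proj_norm_sq: "(norm (proj_span V v))\<^sup>2 = inner v (proj_span V v)"
  using proj_inner[where w="proj_span V v" and V=V and v=v, OF proj_props(1)] by (simp add: power2_norm_eq_inner)

lemma proj_norm_le: "norm (proj_span V v) \<le> norm v"
proof -
  have "(norm (proj_span V v))\<^sup>2 \<le> norm v * norm (proj_span V v)"
    unfolding proj_norm_sq by (rule norm_cauchy_schwarz)
  then have "norm (proj_span V v) * norm (proj_span V v) \<le> norm v * norm (proj_span V v)"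
    by (simp add: power2_eq_square)
  then show ?thesis
    by (cases "norm (proj_span V v) = 0") (auto simp: mult_le_cancel_right)
qed

lemma proj_norm_sq_basis:
  fixes V :: "(real^'d) set"
  shows "\<exists>B. finite B \<and> span B = span V \<and> card B = dim V \<and> (\<forall>u\<in>B. norm u = 1) \<and>
    (\<forall>v. (norm (proj_span V v))\<^sup>2 = (\<Sum>u\<in>B. (inner v u)\<^sup>2))"
proof -
  from proj_basis_aux[of V] obtain B where B: "finite B" "span B = span V" "pairwise orthogonal B" "\<forall>u\<in>B. norm u = 1"
    "card B = dim V" "\<forall>v. proj_span V v = (\<Sum>u\<in>B. inner v u *\<^sub>R u)"
    by blast
  have nsq: "(norm (proj_span V v))\<^sup>2 = (\<Sum>u\<in>B. (inner v u)\<^sup>2)" for v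
  proof -
    have "(norm (\<Sum>u\<in>B. inner v u *\<^sub>R u))\<^sup>2 = (\<Sum>u\<in>B. (norm (inner v u *\<^sub>R u))\<^sup>2)"
      proof (rule norm_sum_Pythagorean[OF B(1)])
      show "pairwise (\<lambda>i j. orthogonal (inner v i *\<^sub>R i) (inner v j *\<^sub>R j)) B"
        using B(3) unfolding pairwise_def orthogonal_def by simp
    qed
    also have "\<dots> = (\<Sum>u\<in>B. (inner v u)\<^sup>2)" using B(4) by (simp add: power2_abs)
    finally show ?thesis using B(6) by metis
  qed
  show ?thesis using B(4) nsq B(1,2,5) by blast
qed





lemma trace_frame:
  fixes \<Phi> :: "nat \<Rightarrow> real^'d" and V :: "(real^'d) set"
  assumes F: "\<And>v. (\<Sum>i=1..K. (inner (\<Phi> i) v)\<^sup>2) = A * (norm v)\<^sup>2"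
  shows "(\<Sum>i=1..K. (norm (proj_span V (\<Phi> i)))\<^sup>2) = A * dim V"
proof -
  from proj_norm_sq_basis[of V] obtain B where B: "finite B" "span B = span V" "card B = dim V" "\<forall>u\<in>B. norm u = 1"
    "\<forall>v. (norm (proj_span V v))\<^sup>2 = (\<Sum>u\<in>B. (inner v u)\<^sup>2)"
    by blast
  have "(\<Sum>i=1..K. (norm (proj_span V (\<Phi> i)))\<^sup>2) = (\<Sum>i=1..K. \<Sum>u\<in>B. (inner (\<Phi> i) u)\<^sup>2)"
    using B(5) by simp
  also have "\<dots> = (\<Sum>u\<in>B. \<Sum>i=1..K. (inner (\<Phi> i) u)\<^sup>2)" by (rule sum.swap)
  also have "\<dots> = (\<Sum>u\<in>B. A)" using F B(4) by simp
  also have "\<dots> = A * dim V" using B(3) by simp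
  finally show ?thesis .
qed

lemma sign_cross:
  fixes A :: "'a set"
  assumes "i \<in> A" "j \<in> A" "i \<noteq> j"
  shows "(\<Sum>\<sigma>\<in>PiE A (\<lambda>_. {-1, 1::real}). \<sigma> i * \<sigma> j) = 0"
proof -
  let ?P = "PiE A (\<lambda>_. {-1, 1::real})"
  define g where "g \<sigma> = \<sigma>(i := - \<sigma> i)" for \<sigma> :: "'a \<Rightarrow> real"
  have gP: "g \<sigma> \<in> ?P" if "\<sigma> \<in> ?P" for \<sigma>
    using that assms(1) unfolding g_def by (auto simp: PiE_def Pi_def extensional_def)
  have gg: "g (g \<sigma>) = \<sigma>" for \<sigma> unfolding g_def by auto
  have "(\<Sum>\<sigma>\<in>?P. \<sigma> i * \<sigma> j) = (\<Sum>\<sigma>\<in>?P. g \<sigma> i * g \<sigma> j)"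
    by (rule sum.reindex_bij_witness[of _ g g]) (auto simp: gP gg)
  also have "\<dots> = - (\<Sum>\<sigma>\<in>?P. \<sigma> i * \<sigma> j)"
    using assms(3) by (simp add: g_def sum_negf[symmetric])
  finally show ?thesis by simp
qed

lemma sign_diag:
  fixes A :: "'a set"
  assumes "finite A" "i \<in> A"
  shows "(\<Sum>\<sigma>\<in>PiE A (\<lambda>_. {-1, 1::real}). \<sigma> i * \<sigma> i) = 2 ^ card A"
proof -
  have "(\<Sum>\<sigma>\<in>PiE A (\<lambda>_. {-1, 1::real}). \<sigma> i * \<sigma> i) = (\<Sum>\<sigma>\<in>PiE A (\<lambda>_. {-1, 1::real}). 1)"
    using assms(2) by (intro sum.cong) (auto simp: PiE_def Pi_def)
  also have "\<dots> = card (PiE A (\<lambda>_. {-1, 1::real}))" by simp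
  also have "\<dots> = 2 ^ card A" using assms(1) by (simp add: card_PiE)
  finally show ?thesis .
qed

lemma sign_avg:
  fixes A :: "'a set" and a :: "'a \<Rightarrow> real"
  assumes "finite A"
  shows "(\<Sum>\<sigma>\<in>PiE A (\<lambda>_. {-1, 1::real}). (\<Sum>i\<in>A. \<sigma> i * a i)\<^sup>2) = 2 ^ card A * (\<Sum>i\<in>A. (a i)\<^sup>2)"
proof -
  let ?P = "PiE A (\<lambda>_. {-1, 1::real})"
  have "(\<Sum>\<sigma>\<in>?P. (\<Sum>i\<in>A. \<sigma> i * a i)\<^sup>2) = (\<Sum>\<sigma>\<in>?P. \<Sum>i\<in>A. \<Sum>j\<in>A. (a i * a j) * (\<sigma> i * \<sigma> j))"
    by (simp add: power2_eq_square sum_product algebra_simps)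
  also have "\<dots> = (\<Sum>i\<in>A. \<Sum>j\<in>A. (a i * a j) * (\<Sum>\<sigma>\<in>?P. \<sigma> i * \<sigma> j))"
    by (simp add: sum_distrib_left sum.swap[of _ ?P])
  also have "\<dots> = (\<Sum>i\<in>A. \<Sum>j\<in>A. (a i * a j) * (if i = j then 2 ^ card A else 0))"
    using assms by (intro sum.cong refl) (auto simp: sign_cross sign_diag)
  also have "\<dots> = 2 ^ card A * (\<Sum>i\<in>A. (a i)\<^sup>2)"
    using assms by (simp add: if_distrib sum_distrib_left power2_eq_square mult.commute cong: if_cong)
  finally show ?thesis .
qed




lemma perm_Ip_card:
  assumes "p permutes {1..K}" "S \<le> K"
  shows "card (p -` {1..S} \<inter> {1..K}) = S"
proof -
  have b: "bij_betw p {1..K} {1..K}" using assms(1) by (rule permutes_imp_bij)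
  let ?J = "p -` {1..S} \<inter> {1..K}"
  have inj: "inj_on p ?J" using b unfolding bij_betw_def by (auto intro: inj_on_subset)
  have "p ` ?J = {1..S}"
  proof
    show "p ` ?J \<subseteq> {1..S}" by auto
    show "{1..S} \<subseteq> p ` ?J"
    proof
      fix x assume x: "x \<in> {1..S}"
      then have "x \<in> p ` {1..K}" using b assms(2) unfolding bij_betw_def by auto
      then obtain y where "y \<in> {1..K}" "x = p y" by auto
      then show "x \<in> p ` ?J" using x by auto
    qed
  qed
  then show ?thesis using card_image[OF inj] by simp
qed

lemma perm_exists:
  assumes I: "I \<subseteq> {1..K}" "card I = S" and SK: "S \<le> K"
  shows "\<exists>p. p permutes {1..K} \<and> p -` {1..S} \<inter> {1..K} = I"
proof -
  have fI: "finite I" using I(1) finite_subset by blast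
  obtain f where f: "bij_betw f I {1..S}"
    using finite_same_card_bij[OF fI, of "{1..S}"] I(2) by auto
  have c2: "card ({1..K} - I) = card {S+1..K}" using I fI SK by (simp add: card_Diff_subset)
  obtain g where g: "bij_betw g ({1..K} - I) {S+1..K}"
    using finite_same_card_bij[of "{1..K} - I" "{S+1..K}"] c2 by auto
  define p where "p x = (if x \<in> I then f x else if x \<in> {1..K} then g x else x)" for x
  have b1: "bij_betw p I {1..S}" using f by (rule bij_betw_cong[THEN iffD1, rotated]) (simp add: p_def)
  have b2: "bij_betw p ({1..K} - I) {S+1..K}" using g by (rule bij_betw_cong[THEN iffD1, rotated]) (simp add: p_def)
  have "bij_betw p (I \<union> ({1..K} - I)) ({1..S} \<union> {S+1..K})"
    by (rule bij_betw_combine[OF b1 b2]) auto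
  moreover have "I \<union> ({1..K} - I) = {1..K}" using I(1) by auto
  moreover have "{1..S} \<union> {S+1..K} = {1..K}" using SK by auto
  ultimately have b: "bij_betw p {1..K} {1..K}" by simp
  have pp: "p permutes {1..K}" by (rule bij_imp_permutes[OF b]) (use I(1) in \<open>auto simp: p_def\<close>)
  have "p -` {1..S} \<inter> {1..K} = I"
  proof (intro set_eqI iffI)
    fix x assume x: "x \<in> p -` {1..S} \<inter> {1..K}"
    show "x \<in> I"
    proof (rule ccontr)
      assume "x \<notin> I"
      then have "x \<in> {1..K} - I" using x by auto
      then have "p x \<in> p ` ({1..K} - I)" by blast
      then have "p x \<in> {S+1..K}" using b2 unfolding bij_betw_def by simp
      then show False using x by auto
    qed
  next
    fix x assume "x \<in> I"
    then show "x \<in> p -` {1..S} \<inter> {1..K}" using b1 I(1) unfolding bij_betw_def by auto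
  qed
  then show ?thesis using pp by blast
qed

lemma swap_pres:
  assumes "p permutes {1..K}" "i \<in> {1..K} - I" "j \<in> {1..K} - I" "p -` {1..S} \<inter> {1..K} = I"
  shows "(p \<circ> Transposition.transpose i j) permutes {1..K} \<and> (p \<circ> Transposition.transpose i j) -` {1..S} \<inter> {1..K} = I"
proof
  show "(p \<circ> Transposition.transpose i j) permutes {1..K}"
    using assms by (intro permutes_compose permutes_swap_id) auto
  have tI: "Transposition.transpose i j x \<in> I \<longleftrightarrow> x \<in> I" for x
    using assms(2,3) by (auto simp: Transposition.transpose_def)
  have tK: "Transposition.transpose i j x \<in> {1..K} \<longleftrightarrow> x \<in> {1..K}" for x
    using assms(2,3) by (auto simp: Transposition.transpose_def)
  show "(p \<circ> Transposition.transpose i j) -` {1..S} \<inter> {1..K} = I"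
  proof (intro set_eqI)
    fix x
    have "x \<in> (p \<circ> Transposition.transpose i j) -` {1..S} \<inter> {1..K} \<longleftrightarrow> Transposition.transpose i j x \<in> p -` {1..S} \<inter> {1..K}"
      using tK by auto
    also have "\<dots> \<longleftrightarrow> x \<in> I" using assms(4) tI by simp
    finally show "x \<in> (p \<circ> Transposition.transpose i j) -` {1..S} \<inter> {1..K} \<longleftrightarrow> x \<in> I" .
  qed
qed

definition Xp :: "nat \<Rightarrow> nat \<Rightarrow> nat set \<Rightarrow> (nat \<Rightarrow> nat) set" where
  "Xp K S I = {p \<in> perms K. p -` {1..S} \<inter> {1..K} = I}"

lemma finite_perms: "finite (perms K)"
  unfolding perms_def using finite_permutations[of "{1..K}"] by simp

lemma W_const:
  fixes c :: "nat \<Rightarrow> real"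
  assumes "i \<in> {1..K} - I" "j \<in> {1..K} - I"
  shows "(\<Sum>p\<in>Xp K S I. h (p i)) = (\<Sum>p\<in>Xp K S I. h (p j))"
proof -
  let ?t = "\<lambda>p. p \<circ> Transposition.transpose i j"
  have tt: "?t (?t p) = p" for p by (auto simp: fun_eq_iff Transposition.transpose_def)
  have mem: "?t p \<in> Xp K S I" if "p \<in> Xp K S I" for p
    using swap_pres[of p K i I j S] that assms unfolding Xp_def perms_def by auto
  have "(\<Sum>p\<in>Xp K S I. h (p i)) = (\<Sum>p\<in>Xp K S I. h (?t p i))"
    by (rule sum.reindex_bij_witness[of _ ?t ?t]) (auto simp: tt mem)
  also have "\<dots> = (\<Sum>p\<in>Xp K S I. h (p j))" by simp
  finally show ?thesis .
qed

lemma weight_ineq: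
  fixes W g1 g2 :: "nat \<Rightarrow> real"
  assumes "finite U" "I \<subseteq> U" "0 \<le> \<beta>"
    and "\<And>i. i \<in> I \<Longrightarrow> \<beta> \<le> W i \<and> g1 i \<le> 1 \<and> g2 i = 1"
    and "\<And>j. j \<in> U - I \<Longrightarrow> W j = \<beta>"
    and "sum g1 U \<le> sum g2 U"
  shows "(\<Sum>i\<in>U. W i * g1 i) \<le> (\<Sum>i\<in>U. W i * g2 i)"
proof -
  have dec: "(\<Sum>i\<in>U. W i * g i) = (\<Sum>i\<in>I. (W i - \<beta>) * g i) + \<beta> * sum g U" for g :: "nat \<Rightarrow> real"
  proof -
    have "(\<Sum>i\<in>U. W i * g i) = (\<Sum>i\<in>U. (W i - \<beta>) * g i) + \<beta> * sum g U"
      by (simp add: algebra_simps sum.distrib sum_distrib_left sum_subtractf)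
    also have "(\<Sum>i\<in>U. (W i - \<beta>) * g i) = (\<Sum>i\<in>I. (W i - \<beta>) * g i)"
      using assms(1,2,5) by (intro sum.mono_neutral_right) auto
    finally show ?thesis .
  qed
  have "(\<Sum>i\<in>I. (W i - \<beta>) * g1 i) \<le> (\<Sum>i\<in>I. (W i - \<beta>) * g2 i)"
    using assms(4) by (intro sum_mono) (simp add: mult_left_le)
  moreover have "\<beta> * sum g1 U \<le> \<beta> * sum g2 U" using assms(3,6) by (rule mult_left_mono[rotated])
  ultimately show ?thesis unfolding dec by linarith
qed




lemma subspace_combs:
  fixes \<Psi> :: "nat \<Rightarrow> real^'d"
  shows "subspace {w. \<exists>a. w = (\<Sum>j\<in>I. a j *\<^sub>R \<Psi> j)}"
  unfolding subspace_def
proof (intro conjI ballI allI)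
  show "0 \<in> {w. \<exists>a. w = (\<Sum>j\<in>I. a j *\<^sub>R \<Psi> j)}" by (auto intro!: exI[of _ "\<lambda>_. 0"])
next
  fix x y assume "x \<in> {w. \<exists>a. w = (\<Sum>j\<in>I. a j *\<^sub>R \<Psi> j)}" "y \<in> {w. \<exists>a. w = (\<Sum>j\<in>I. a j *\<^sub>R \<Psi> j)}"
  then obtain a b where "x = (\<Sum>j\<in>I. a j *\<^sub>R \<Psi> j)" "y = (\<Sum>j\<in>I. b j *\<^sub>R \<Psi> j)" by blast
  then show "x + y \<in> {w. \<exists>a. w = (\<Sum>j\<in>I. a j *\<^sub>R \<Psi> j)}"
    by (auto intro!: exI[of _ "\<lambda>j. a j + b j"] simp: sum.distrib scaleR_add_left)
next
  fix c :: real and x assume "x \<in> {w. \<exists>a. w = (\<Sum>j\<in>I. a j *\<^sub>R \<Psi> j)}"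
  then obtain a where "x = (\<Sum>j\<in>I. a j *\<^sub>R \<Psi> j)" by blast
  then show "c *\<^sub>R x \<in> {w. \<exists>a. w = (\<Sum>j\<in>I. a j *\<^sub>R \<Psi> j)}"
    by (auto intro!: exI[of _ "\<lambda>j. c * a j"] simp: scaleR_sum_right)
qed

lemma span_image_sum:
  fixes \<Psi> :: "nat \<Rightarrow> real^'d"
  assumes "finite I" "w \<in> span (\<Psi> ` I)"
  shows "\<exists>a. w = (\<Sum>j\<in>I. a j *\<^sub>R \<Psi> j)"
  using assms(2)
proof (induction rule: span_induct)
  case base
  show ?case using subspace_combs[of \<Psi> I] by simp
next
  case (step x)
  then obtain k where k: "k \<in> I" "x = \<Psi> k" by blast
  have "(\<Sum>j\<in>I. (if j = k then 1 else 0) *\<^sub>R \<Psi> j) = (\<Sum>j\<in>I. if j = k then \<Psi> j else 0)"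
    by (intro sum.cong) auto
  also have "\<dots> = \<Psi> k" using k(1) assms(1) by (simp add: sum.delta')
  finally show ?case using k(2) by metis
qed

lemma dual_vectors:
  fixes \<Phi> :: "nat \<Rightarrow> real^'d"
  assumes "\<And>k. k \<in> I \<Longrightarrow> \<Phi> k \<notin> span (\<Phi> ` (I - {k}))"
  shows "\<exists>g. \<forall>k\<in>I. \<forall>j\<in>I. inner (g k) (\<Phi> j) = (if j = k then 1 else 0)"
proof -
  define r where "r k = \<Phi> k - proj_span (\<Phi> ` (I - {k})) (\<Phi> k)" for k
  define g where "g k = (1 / (norm (r k))\<^sup>2) *\<^sub>R r k" for k
  have "inner (g k) (\<Phi> j) = (if j = k then 1 else 0)" if k: "k \<in> I" and j: "j \<in> I" for k j
  proof (cases "j = k")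
    case True
    have pin: "proj_span (\<Phi> ` (I - {k})) (\<Phi> k) \<in> span (\<Phi> ` (I - {k}))" by (rule proj_props(1))
    have r0: "r k \<noteq> 0" using assms[OF k] pin unfolding r_def by auto
    have eq: "\<Phi> k = r k + proj_span (\<Phi> ` (I - {k})) (\<Phi> k)" unfolding r_def by simp
    have z: "inner (r k) (proj_span (\<Phi> ` (I - {k})) (\<Phi> k)) = 0"
      using proj_props(2)[OF pin, of "\<Phi> k"] unfolding r_def .
    have "inner (r k) (\<Phi> k) = inner (r k) (r k) + inner (r k) (proj_span (\<Phi> ` (I - {k})) (\<Phi> k))"
      by (metis inner_add_right eq)
    then have "inner (r k) (\<Phi> k) = (norm (r k))\<^sup>2" using z by (simp add: power2_norm_eq_inner)
    then show ?thesis using True r0 unfolding g_def by simp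
  next
    case False
    have "\<Phi> j \<in> span (\<Phi> ` (I - {k}))" using j False by (intro span_base) auto
    then have "inner (r k) (\<Phi> j) = 0" unfolding r_def by (rule proj_props(2))
    then show ?thesis using False unfolding g_def by simp
  qed
  then show ?thesis by blast
qed

lemma lower_bound:
  fixes \<Psi> :: "nat \<Rightarrow> real^'d"
  assumes "z \<in> span (\<Psi> ` J)" "norm z > 0"
  shows "inner y z / norm z \<le> norm (proj_span (\<Psi> ` J) y)"
proof -
  have "inner y z = inner (proj_span (\<Psi> ` J) y) z" by (rule proj_inner[OF assms(1)])
  also have "\<dots> \<le> norm (proj_span (\<Psi> ` J) y) * norm z" by (rule norm_cauchy_schwarz)
  finally show ?thesis using assms(2) by (simp add: divide_le_eq)
qed

lemma upper_bound:
  fixes \<Phi> \<Psi> :: "nat \<Rightarrow> real^'d" and g :: "nat \<Rightarrow> real^'d"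
  assumes fin: "finite I"
    and dual: "\<forall>k\<in>I. \<forall>j\<in>I. inner (g k) (\<Phi> j) = (if j = k then 1 else 0)"
    and small: "(\<Sum>k\<in>I. norm (g k)) * (\<Sum>j\<in>I. norm (\<Psi> j - \<Phi> j)) \<le> 1/2"
  shows "norm (proj_span (\<Psi> ` I) y) \<le> norm (proj_span (\<Phi> ` I) y)
     + 2 * (\<Sum>k\<in>I. norm (g k)) * norm (y - proj_span (\<Phi> ` I) y) * (\<Sum>j\<in>I. norm (\<Psi> j - \<Phi> j))"
proof -
  let ?w = "proj_span (\<Psi> ` I) y"
  let ?Q = "proj_span (\<Phi> ` I) y"
  let ?e = "y - ?Q"
  define G where "G = (\<Sum>k\<in>I. norm (g k))"
  define D where "D = (\<Sum>j\<in>I. norm (\<Psi> j - \<Phi> j))"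
  have G0: "G \<ge> 0" unfolding G_def by (simp add: sum_nonneg)
  have D0: "D \<ge> 0" unfolding D_def by (simp add: sum_nonneg)
  have dj: "norm (\<Psi> j - \<Phi> j) \<le> D" if "j \<in> I" for j
    unfolding D_def using fin that by (intro member_le_sum) auto
  obtain a where a: "?w = (\<Sum>j\<in>I. a j *\<^sub>R \<Psi> j)"
    using span_image_sum[OF fin proj_props(1)] by blast
  define L where "L = (\<Sum>j\<in>I. \<bar>a j\<bar>)"
  have L0: "L \<ge> 0" unfolding L_def by (simp add: sum_nonneg)
  have cross: "\<bar>\<Sum>j\<in>I. a j * inner v (\<Psi> j - \<Phi> j)\<bar> \<le> norm v * L * D" for v
  proof -
    have "\<bar>\<Sum>j\<in>I. a j * inner v (\<Psi> j - \<Phi> j)\<bar> \<le> (\<Sum>j\<in>I. \<bar>a j\<bar> * (norm v * D))"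
    proof (rule order_trans[OF sum_abs], rule sum_mono)
      fix j assume j: "j \<in> I"
      have "\<bar>inner v (\<Psi> j - \<Phi> j)\<bar> \<le> norm v * norm (\<Psi> j - \<Phi> j)" by (rule Cauchy_Schwarz_ineq2)
      also have "\<dots> \<le> norm v * D" using dj[OF j] by (simp add: mult_left_mono)
      finally show "\<bar>a j * inner v (\<Psi> j - \<Phi> j)\<bar> \<le> \<bar>a j\<bar> * (norm v * D)"
        by (simp add: abs_mult mult_left_mono)
    qed
    also have "\<dots> = (\<Sum>j\<in>I. \<bar>a j\<bar>) * (norm v * D)" by (rule sum_distrib_right[symmetric])
    also have "\<dots> = norm v * L * D" unfolding L_def by (simp add: algebra_simps)
    finally show ?thesis .
  qed
  have ak: "\<bar>a k\<bar> \<le> norm (g k) * (norm ?w + L * D)" if k: "k \<in> I" for k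
  proof -
    have "inner (g k) ?w = (\<Sum>j\<in>I. a j * inner (g k) (\<Phi> j)) + (\<Sum>j\<in>I. a j * inner (g k) (\<Psi> j - \<Phi> j))"
      unfolding a by (simp add: inner_sum_right inner_diff_right sum.distrib[symmetric] algebra_simps)
    also have "(\<Sum>j\<in>I. a j * inner (g k) (\<Phi> j)) = (\<Sum>j\<in>I. if j = k then a j else 0)"
      using dual k by (intro sum.cong) auto
    also have "\<dots> = a k" using k fin by (simp add: sum.delta')
    finally have "a k = inner (g k) ?w - (\<Sum>j\<in>I. a j * inner (g k) (\<Psi> j - \<Phi> j))" by simp
    then have "\<bar>a k\<bar> \<le> \<bar>inner (g k) ?w\<bar> + \<bar>\<Sum>j\<in>I. a j * inner (g k) (\<Psi> j - \<Phi> j)\<bar>" by linarith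
    also have "\<dots> \<le> norm (g k) * norm ?w + norm (g k) * L * D"
      using Cauchy_Schwarz_ineq2[of "g k" ?w] cross[of "g k"] by linarith
    finally show ?thesis by (simp add: algebra_simps)
  qed
  have "L \<le> (\<Sum>k\<in>I. norm (g k) * (norm ?w + L * D))" using ak unfolding L_def by (intro sum_mono) (simp add: L_def)
  also have "\<dots> = (\<Sum>k\<in>I. norm (g k)) * (norm ?w + L * D)" by (rule sum_distrib_right[symmetric])
  also have "\<dots> = G * norm ?w + G * D * L" unfolding G_def by (simp add: algebra_simps)
  finally have "L \<le> G * norm ?w + G * D * L" .
  moreover have "G * D * L \<le> L / 2" using small L0 unfolding G_def D_def
    by (metis mult_right_mono mult.commute times_divide_eq_right mult_1 )
  ultimately have Lb: "L \<le> 2 * G * norm ?w" by linarith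
  have eQ: "inner ?e (\<Phi> j) = 0" if "j \<in> I" for j
    using that by (intro proj_props(2) span_base) auto
  have "(norm ?w)\<^sup>2 = inner y ?w" by (rule proj_norm_sq)
  also have "\<dots> = inner ?Q ?w + inner ?e ?w" by (simp add: inner_diff_left)
  also have "inner ?e ?w = (\<Sum>j\<in>I. a j * inner ?e (\<Psi> j - \<Phi> j))"
    unfolding a using eQ by (simp add: inner_sum_right inner_diff_right algebra_simps)
  also have "inner ?Q ?w + \<dots> \<le> norm ?Q * norm ?w + norm ?e * L * D"
    using norm_cauchy_schwarz[of ?Q ?w] cross[of ?e] by linarith
  also have "\<dots> \<le> norm ?Q * norm ?w + norm ?e * (2 * G * norm ?w) * D"
    using Lb D0 by (simp add: mult_left_mono mult_right_mono)
  finally have "norm ?w * norm ?w \<le> norm ?w * (norm ?Q + 2 * G * norm ?e * D)"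
    by (simp add: power2_eq_square algebra_simps)
  moreover have "0 \<le> norm ?Q + 2 * G * norm ?e * D" using G0 D0 by simp
  ultimately have "norm ?w \<le> norm ?Q + 2 * G * norm ?e * D"
    by (cases "norm ?w = 0") (auto simp: mult_le_cancel_left)
  then show ?thesis unfolding G_def D_def .
qed

definition nbhd :: "nat \<Rightarrow> (nat \<Rightarrow> real^'d) \<Rightarrow> (nat \<Rightarrow> real^'d) filter" where
  "nbhd K \<Phi> = (INF e\<in>{0<..}. principal {\<Psi>. \<forall>i\<in>{1..K}. norm (\<Psi> i - \<Phi> i) < (e::real)})"

lemma eventually_nbhd:
  "eventually Pr (nbhd K \<Phi>) \<longleftrightarrow> (\<exists>e>0. \<forall>\<Psi>. (\<forall>i\<in>{1..K}. norm (\<Psi> i - \<Phi> i) < e) \<longrightarrow> Pr \<Psi>)"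
proof -
  have "eventually Pr (nbhd K \<Phi>) \<longleftrightarrow>
     (\<exists>e\<in>{0<..}. eventually Pr (principal {\<Psi>. \<forall>i\<in>{1..K}. norm (\<Psi> i - \<Phi> i) < (e::real)}))"
    unfolding nbhd_def
  proof (rule eventually_INF_base)
    show "{0<..} \<noteq> ({}::real set)" by auto
    fix a b :: real assume "a \<in> {0<..}" "b \<in> {0<..}"
    then show "\<exists>x\<in>{0<..}. principal {\<Psi>. \<forall>i\<in>{1..K}. norm (\<Psi> i - \<Phi> i) < x}
        \<le> inf (principal {\<Psi>. \<forall>i\<in>{1..K}. norm (\<Psi> i - \<Phi> i) < a})
               (principal {\<Psi>. \<forall>i\<in>{1..K}. norm (\<Psi> i - \<Phi> i) < b})"
      by (intro bexI[of _ "min a b"]) auto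
  qed
  then show ?thesis by (auto simp: eventually_principal)
qed

lemma coord_tendsto:
  fixes \<Phi> :: "nat \<Rightarrow> real^'d"
  assumes "i \<in> {1..K}"
  shows "((\<lambda>\<Psi>. \<Psi> i) \<longlongrightarrow> \<Phi> i) (nbhd K \<Phi>)"
  unfolding tendsto_iff
proof (intro allI impI)
  fix e :: real assume "e > 0"
  then show "eventually (\<lambda>\<Psi>. dist (\<Psi> i) (\<Phi> i) < e) (nbhd K \<Phi>)"
    unfolding eventually_nbhd using assms by (auto simp: dist_norm)
qed

lemma separation:
  fixes \<Phi> :: "nat \<Rightarrow> real^'d" and g :: "nat \<Rightarrow> real^'d"
  assumes fI: "finite I" and fJ: "finite J" and IK: "I \<subseteq> {1..K}" and JK: "J \<subseteq> {1..K}"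
    and dual: "\<forall>k\<in>I. \<forall>j\<in>I. inner (g k) (\<Phi> j) = (if j = k then 1 else 0)"
    and lt: "norm (proj_span (\<Phi> ` I) y) < norm (proj_span (\<Phi> ` J) y)"
  shows "eventually (\<lambda>\<Psi>. norm (proj_span (\<Psi> ` I) y) \<le> norm (proj_span (\<Psi> ` J) y)) (nbhd K \<Phi>)"
proof -
  let ?F = "nbhd K \<Phi>"
  define z where "z = proj_span (\<Phi> ` J) y"
  obtain b where b: "z = (\<Sum>j\<in>J. b j *\<^sub>R \<Phi> j)"
    using span_image_sum[OF fJ proj_props(1)] unfolding z_def by blast
  define z' where "z' \<Psi> = (\<Sum>j\<in>J. b j *\<^sub>R \<Psi> j)" for \<Psi> :: "nat \<Rightarrow> real^'d"
  have z'z: "(z' \<longlongrightarrow> z) ?F" unfolding z'_def b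
    by (intro tendsto_intros coord_tendsto) (use JK in auto)
  have nz: "norm z > 0" using lt unfolding z_def by (meson norm_ge_zero le_less_trans)
  have iyz: "inner y z = (norm z)\<^sup>2" unfolding z_def by (simp add: proj_norm_sq)
  have f2: "((\<lambda>\<Psi>. inner y (z' \<Psi>) / norm (z' \<Psi>)) \<longlongrightarrow> norm z) ?F"
  proof -
    have "((\<lambda>\<Psi>. inner y (z' \<Psi>) / norm (z' \<Psi>)) \<longlongrightarrow> inner y z / norm z) ?F"
      using nz by (intro tendsto_intros z'z) auto
    moreover have "inner y z / norm z = norm z" using nz iyz by (simp add: power2_eq_square)
    ultimately show ?thesis by simp
  qed
  define G where "G = (\<Sum>k\<in>I. norm (g k))"
  define D where "D \<Psi> = (\<Sum>j\<in>I. norm (\<Psi> j - \<Phi> j))" for \<Psi> :: "nat \<Rightarrow> real^'d"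
  have D0: "(D \<longlongrightarrow> 0) ?F"
  proof -
    have "(D \<longlongrightarrow> (\<Sum>j\<in>I. norm (\<Phi> j - \<Phi> j))) ?F" unfolding D_def
      by (intro tendsto_intros coord_tendsto) (use IK in auto)
    then show ?thesis by simp
  qed
  let ?Q = "proj_span (\<Phi> ` I) y"
  define f1 where "f1 \<Psi> = norm ?Q + 2 * G * norm (y - ?Q) * D \<Psi>" for \<Psi>
  have f1l: "(f1 \<longlongrightarrow> norm ?Q) ?F"
  proof -
    have "(f1 \<longlongrightarrow> norm ?Q + 2 * G * norm (y - ?Q) * 0) ?F" unfolding f1_def
      by (intro tendsto_intros D0)
    then show ?thesis by simp
  qed
  define m where "m = (norm ?Q + norm z) / 2"
  have m1: "norm ?Q < m" "m < norm z" using lt unfolding m_def z_def by auto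
  have e1: "eventually (\<lambda>\<Psi>. f1 \<Psi> < m) ?F" by (rule order_tendstoD(2)[OF f1l m1(1)])
  have e2: "eventually (\<lambda>\<Psi>. m < inner y (z' \<Psi>) / norm (z' \<Psi>)) ?F" by (rule order_tendstoD(1)[OF f2 m1(2)])
  have e3: "eventually (\<lambda>\<Psi>. 0 < norm (z' \<Psi>)) ?F"
    by (rule order_tendstoD(1)[OF tendsto_norm[OF z'z] nz])
  have GD: "((\<lambda>\<Psi>. G * D \<Psi>) \<longlongrightarrow> G * 0) ?F" by (intro tendsto_intros D0)
  have e4: "eventually (\<lambda>\<Psi>. G * D \<Psi> < 1/2) ?F" by (rule order_tendstoD(2)[OF GD]) simp
  show ?thesis
    using e1 e2 e3 e4
  proof eventually_elim
    case (elim \<Psi>)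
    have "norm (proj_span (\<Psi> ` I) y) \<le> f1 \<Psi>"
      unfolding f1_def G_def D_def
      by (rule upper_bound[OF fI dual]) (use elim(4) in \<open>simp add: G_def D_def\<close>)
    also have "\<dots> < m" by (rule elim(1))
    also have "\<dots> < inner y (z' \<Psi>) / norm (z' \<Psi>)" by (rule elim(2))
    also have "\<dots> \<le> norm (proj_span (\<Psi> ` J) y)"
    proof (rule lower_bound[OF _ elim(3)])
      show "z' \<Psi> \<in> span (\<Psi> ` J)" unfolding z'_def
        by (intro span_sum span_mul span_base) auto
    qed
    finally show ?case by simp
  qed
qed




lemma proj_span_cong: "span V = span W \<Longrightarrow> proj_span V v = proj_span W v"
  unfolding proj_span_def by simp

lemma sign_proj_sum:
  fixes \<Phi> \<Psi> :: "nat \<Rightarrow> real^'d" and c :: "nat \<Rightarrow> real"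
  shows "(\<Sum>\<sigma>\<in>signs K. (norm (proj_span (\<Psi> ` J) (synth K \<Phi> (c_ps c p \<sigma>))))\<^sup>2)
     = 2 ^ K * (\<Sum>i=1..K. (c (p i))\<^sup>2 * (norm (proj_span (\<Psi> ` J) (\<Phi> i)))\<^sup>2)"
proof -
  from proj_norm_sq_basis[of "\<Psi> ` J"] obtain B where B: "finite B"
    "\<forall>v. (norm (proj_span (\<Psi> ` J) v))\<^sup>2 = (\<Sum>u\<in>B. (inner v u)\<^sup>2)"
    by blast
  have inn: "inner (synth K \<Phi> (c_ps c p \<sigma>)) u = (\<Sum>i\<in>{1..K}. \<sigma> i * (c (p i) * inner (\<Phi> i) u))" for \<sigma> u
    unfolding synth_def c_ps_def by (simp add: inner_sum_left mult.assoc)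
  have "(\<Sum>\<sigma>\<in>signs K. (norm (proj_span (\<Psi> ` J) (synth K \<Phi> (c_ps c p \<sigma>))))\<^sup>2)
      = (\<Sum>\<sigma>\<in>signs K. \<Sum>u\<in>B. (\<Sum>i\<in>{1..K}. \<sigma> i * (c (p i) * inner (\<Phi> i) u))\<^sup>2)"
    using B(2) inn by simp
  also have "\<dots> = (\<Sum>u\<in>B. \<Sum>\<sigma>\<in>signs K. (\<Sum>i\<in>{1..K}. \<sigma> i * (c (p i) * inner (\<Phi> i) u))\<^sup>2)"
    by (rule sum.swap)
  also have "\<dots> = (\<Sum>u\<in>B. 2 ^ K * (\<Sum>i\<in>{1..K}. (c (p i) * inner (\<Phi> i) u)\<^sup>2))"
    unfolding signs_def by (intro sum.cong refl) (simp add: sign_avg)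
  also have "\<dots> = 2 ^ K * (\<Sum>i\<in>{1..K}. (c (p i))\<^sup>2 * (\<Sum>u\<in>B. (inner (\<Phi> i) u)\<^sup>2))"
    by (simp add: sum_distrib_left sum.swap[of _ B] power_mult_distrib)
  also have "\<dots> = 2 ^ K * (\<Sum>i=1..K. (c (p i))\<^sup>2 * (norm (proj_span (\<Psi> ` J) (\<Phi> i)))\<^sup>2)"
    using B(2) by simp
  finally show ?thesis .
qed

theorem theorem5:
  fixes \<Phi> :: "nat \<Rightarrow> real^'d" and K S :: nat and c :: "nat \<Rightarrow> real"
  assumes frame: "unit_norm_tight_frame K \<Phi> (real K / real CARD('d))"
    and S: "1 \<le> S" "S \<le> K"
    and c_dec: "\<And>i j. 1 \<le> i \<Longrightarrow> i \<le> j \<Longrightarrow> j \<le> K \<Longrightarrow> c j \<le> c i"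
    and c_nonneg: "c K \<ge> 0"
    and c_norm: "sqrt (\<Sum>i=1..K. (c i)\<^sup>2) = 1"
    and gap: "\<And>p \<sigma> I. p \<in> perms K \<Longrightarrow> \<sigma> \<in> signs K \<Longrightarrow>
               I \<subseteq> {1..K} \<Longrightarrow> card I \<le> S \<Longrightarrow> I \<noteq> p -` {1..S} \<inter> {1..K} \<Longrightarrow>
               norm (P I \<Phi> (synth K \<Phi> (c_ps c p \<sigma>)))
                 < norm (P (p -` {1..S} \<inter> {1..K}) \<Phi> (synth K \<Phi> (c_ps c p \<sigma>)))"
  shows "local_max_on_dicts K (objective K S \<Phi> c) \<Phi>"
proof -
  define A where "A = real K / real CARD('d)"
  have A0: "A \<ge> 0" unfolding A_def by simp
  have dict: "is_dict K \<Phi>" and F: "\<And>v. (\<Sum>i=1..K. (inner (\<Phi> i) v)\<^sup>2) = A * (norm v)\<^sup>2"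
    using frame unfolding unit_norm_tight_frame_def A_def by auto
  have n1: "norm (\<Phi> i) = 1" if "i \<in> {1..K}" for i using dict that unfolding is_dict_def by auto
  have c_nn: "c i \<ge> 0" if "i \<in> {1..K}" for i using c_dec[of i K] c_nonneg that by auto
  define Ip where "Ip p = p -` {1..S} \<inter> {1..K}" for p :: "nat \<Rightarrow> nat"
  have Ip_sub: "Ip p \<subseteq> {1..K}" for p unfolding Ip_def by auto
  have Ip_card: "card (Ip p) = S" if "p \<in> perms K" for p
    using perm_Ip_card[of p K S] that S(2) unfolding Ip_def perms_def by auto
  have signs_ne: "signs K \<noteq> {}" unfolding signs_def by (simp add: PiE_eq_empty_iff)
  then obtain \<sigma>0 where \<sigma>0: "\<sigma>0 \<in> signs K" by blast
  have indep: "\<Phi> k \<notin> span (\<Phi> ` (I - {k}))" if I: "I \<subseteq> {1..K}" "card I \<le> S" and k: "k \<in> I" for I k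
  proof
    assume kin: "\<Phi> k \<in> span (\<Phi> ` (I - {k}))"
    have fI: "finite I" using I(1) finite_subset by blast
    have "S - card I \<le> card ({1..K} - I)" using I S fI by (simp add: card_Diff_subset)
    then obtain T where T: "T \<subseteq> {1..K} - I" "card T = S - card I" "finite T"
      by (rule obtain_subset_with_card_n)
    define I' where "I' = I \<union> T"
    have I'K: "I' \<subseteq> {1..K}" using I(1) T(1) unfolding I'_def by auto
    have cI': "card I' = S" unfolding I'_def using T I fI by (subst card_Un_disjoint) auto
    obtain p where p: "p permutes {1..K}" "p -` {1..S} \<inter> {1..K} = I'"
      using perm_exists[OF I'K cI' S(2)] by blast
    have pP: "p \<in> perms K" using p(1) unfolding perms_def by simp
    have kI': "k \<in> I'" using k unfolding I'_def by auto
    have fI': "finite I'" using I'K finite_subset by blast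
    have "card (I' - {k}) \<le> S" using cI' fI' kI' by simp
    moreover have "I' - {k} \<noteq> p -` {1..S} \<inter> {1..K}" using p(2) kI' by auto
    ultimately have lt: "norm (P (I' - {k}) \<Phi> (synth K \<Phi> (c_ps c p \<sigma>0)))
        < norm (P I' \<Phi> (synth K \<Phi> (c_ps c p \<sigma>0)))"
      using gap[OF pP \<sigma>0, of "I' - {k}"] I'K p(2) by auto
    have "\<Phi> k \<in> span (\<Phi> ` (I' - {k}))"
      using kin span_mono[of "\<Phi> ` (I - {k})" "\<Phi> ` (I' - {k})"] unfolding I'_def by auto
    then have "span (insert (\<Phi> k) (\<Phi> ` (I' - {k}))) = span (\<Phi> ` (I' - {k}))" by (rule span_redundant)
    moreover have "insert (\<Phi> k) (\<Phi> ` (I' - {k})) = \<Phi> ` I'" using kI' by auto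
    ultimately have "span (\<Phi> ` I') = span (\<Phi> ` (I' - {k}))" by simp
    then have "P I' \<Phi> = P (I' - {k}) \<Phi>" unfolding P_def by (intro ext proj_span_cong)
    then show False using lt by simp
  qed
  have dual: "\<exists>g. \<forall>k\<in>I. \<forall>j\<in>I. inner (g k) (\<Phi> j) = (if j = k then 1 else 0)"
    if "I \<subseteq> {1..K}" "card I \<le> S" for I
    by (rule dual_vectors) (use indep that in blast)
  define y where "y p \<sigma> = synth K \<Phi> (c_ps c p \<sigma>)" for p \<sigma>
  define Is where "Is = {I. I \<subseteq> {1..K} \<and> card I \<le> S}"
  have fIs: "finite Is" unfolding Is_def by (rule finite_subset[of _ "Pow {1..K}"]) auto
  have ev: "eventually (\<lambda>\<Psi>. \<forall>p\<in>perms K. \<forall>\<sigma>\<in>signs K. \<forall>I\<in>Is.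
      norm (proj_span (\<Psi> ` I) (y p \<sigma>)) \<le> norm (proj_span (\<Psi> ` Ip p) (y p \<sigma>))) (nbhd K \<Phi>)"
  proof (intro eventually_ball_finite ballI finite_perms fIs)
    show "finite (signs K)" unfolding signs_def by (intro finite_PiE) auto
    fix p \<sigma> I assume p: "p \<in> perms K" and \<sigma>: "\<sigma> \<in> signs K" and I: "I \<in> Is"
    show "eventually (\<lambda>\<Psi>. norm (proj_span (\<Psi> ` I) (y p \<sigma>)) \<le> norm (proj_span (\<Psi> ` Ip p) (y p \<sigma>))) (nbhd K \<Phi>)"
    proof (cases "I = Ip p")
      case True then show ?thesis by simp
    next
      case False
      have IK: "I \<subseteq> {1..K}" "card I \<le> S" using I unfolding Is_def by auto
      obtain g where g: "\<forall>k\<in>I. \<forall>j\<in>I. inner (g k) (\<Phi> j) = (if j = k then 1 else 0)"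
        using dual[OF IK] by blast
      have lt: "norm (proj_span (\<Phi> ` I) (y p \<sigma>)) < norm (proj_span (\<Phi> ` Ip p) (y p \<sigma>))"
        using gap[OF p \<sigma> IK] False unfolding Ip_def y_def P_def by auto
      show ?thesis
        by (rule separation[OF _ _ IK(1) Ip_sub g lt])
           (use IK(1) finite_subset Ip_sub in \<open>blast+\<close>)
    qed
  qed
  define gv where "gv \<Psi> J i = (norm (proj_span (\<Psi> ` J) (\<Phi> i)))\<^sup>2" for \<Psi> :: "nat \<Rightarrow> real^'d" and J i
  define h where "h \<Psi> p = (\<Sum>i=1..K. (c (p i))\<^sup>2 * gv \<Psi> (Ip p) i)" for \<Psi> :: "nat \<Rightarrow> real^'d" and p
  define Tot where "Tot \<Psi> = (\<Sum>p\<in>perms K. \<Sum>\<sigma>\<in>signs K. (norm (proj_span (\<Psi> ` Ip p) (y p \<sigma>)))\<^sup>2)"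
    for \<Psi> :: "nat \<Rightarrow> real^'d"
  have tot_eq: "Tot \<Psi> = 2 ^ K * (\<Sum>p\<in>perms K. h \<Psi> p)" for \<Psi>
    unfolding Tot_def h_def gv_def y_def by (simp add: sign_proj_sum sum_distrib_left)
  define Ts where "Ts = {I. I \<subseteq> {1..K} \<and> card I = S}"
  have fTs: "finite Ts" unfolding Ts_def by (rule finite_subset[of _ "Pow {1..K}"]) auto
  have grp: "(\<Sum>p\<in>perms K. h \<Psi> p) = (\<Sum>I\<in>Ts. \<Sum>p\<in>Xp K S I. h \<Psi> p)" for \<Psi>
  proof -
    have "(\<Sum>I\<in>Ts. \<Sum>p\<in>{p. p \<in> perms K \<and> Ip p = I}. h \<Psi> p) = (\<Sum>p\<in>perms K. h \<Psi> p)"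
      by (rule sum.group[OF finite_perms fTs]) (use Ip_sub Ip_card in \<open>auto simp: Ts_def\<close>)
    moreover have "{p. p \<in> perms K \<and> Ip p = I} = Xp K S I" for I unfolding Xp_def Ip_def by auto
    ultimately show ?thesis by simp
  qed
  have grp_le: "(\<Sum>p\<in>Xp K S I. h \<Psi> p) \<le> (\<Sum>p\<in>Xp K S I. h \<Phi> p)" if I: "I \<in> Ts" for I \<Psi>
  proof -
    have IK: "I \<subseteq> {1..K}" "card I = S" using I unfolding Ts_def by auto
    have fI: "finite I" using IK(1) finite_subset by blast
    define W where "W i = (\<Sum>p\<in>Xp K S I. (c (p i))\<^sup>2)" for i
    have XI: "Ip p = I" if "p \<in> Xp K S I" for p using that unfolding Xp_def Ip_def by auto
    have fX: "finite (Xp K S I)" unfolding Xp_def using finite_perms by simp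
    have hW: "(\<Sum>p\<in>Xp K S I. h \<Psi>' p) = (\<Sum>i=1..K. W i * gv \<Psi>' I i)" for \<Psi>'
    proof -
      have "(\<Sum>p\<in>Xp K S I. h \<Psi>' p) = (\<Sum>p\<in>Xp K S I. \<Sum>i=1..K. (c (p i))\<^sup>2 * gv \<Psi>' I i)"
        unfolding h_def using XI by simp
      also have "\<dots> = (\<Sum>i=1..K. W i * gv \<Psi>' I i)"
        unfolding W_def by (simp add: sum.swap[of _ "Xp K S I"] sum_distrib_right)
      finally show ?thesis .
    qed
    have W0: "W i \<ge> 0" for i unfolding W_def by (simp add: sum_nonneg)
    have Wge: "W j \<le> W i" if "i \<in> I" "j \<in> {1..K} - I" for i j
      unfolding W_def
    proof (rule sum_mono)
      fix p assume p: "p \<in> Xp K S I"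
      then have pp: "p permutes {1..K}" and pI: "p -` {1..S} \<inter> {1..K} = I"
        unfolding Xp_def perms_def by auto
      have pi: "p i \<in> {1..S}" using that(1) pI by auto
      have pjK: "p j \<in> {1..K}" using that(2) permutes_in_image[OF pp, of j] by blast
      have pj: "p j \<notin> {1..S}" using that(2) pI by auto
      have "c (p j) \<le> c (p i)" using pi pjK pj by (intro c_dec) auto
      moreover have "0 \<le> c (p j)" using c_nn[OF pjK] .
      ultimately show "(c (p j))\<^sup>2 \<le> (c (p i))\<^sup>2" by (rule power_mono)
    qed
    define \<beta> where "\<beta> = (if {1..K} - I = {} then 0 else W (SOME j. j \<in> {1..K} - I))"
    have b0: "0 \<le> \<beta>" unfolding \<beta>_def using W0 by simp
    have bconst: "W j = \<beta>" if "j \<in> {1..K} - I" for j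
    proof -
      have ne: "{1..K} - I \<noteq> {}" using that by auto
      have "(SOME j. j \<in> {1..K} - I) \<in> {1..K} - I" using ne by (metis ex_in_conv someI_ex)
      then show ?thesis unfolding \<beta>_def W_def using ne W_const[OF that] by simp
    qed
    have ble: "\<beta> \<le> W i" if "i \<in> I" for i
    proof (cases "{1..K} - I = {}")
      case True then show ?thesis unfolding \<beta>_def using W0 by simp
    next
      case False
      then obtain j where "j \<in> {1..K} - I" by blast
      then show ?thesis using bconst Wge[OF that] by metis
    qed
    have g1: "gv \<Psi> I i \<le> 1" if "i \<in> {1..K}" for i
    proof -
      have "norm (proj_span (\<Psi> ` I) (\<Phi> i)) \<le> 1" using proj_norm_le n1[OF that] by metis
      then show ?thesis unfolding gv_def by (simp add: power_le_one)
    qed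
    have g2: "gv \<Phi> I i = 1" if "i \<in> I" for i
    proof -
      have "\<Phi> i \<in> span (\<Phi> ` I)" using that by (intro span_base) auto
      then show ?thesis unfolding gv_def using n1 IK(1) that by (auto simp: proj_id)
    qed
    have injI: "inj_on \<Phi> I"
    proof (rule inj_onI)
      fix a b assume ab: "a \<in> I" "b \<in> I" "\<Phi> a = \<Phi> b"
      show "a = b"
      proof (rule ccontr)
        assume "a \<noteq> b"
        then have "\<Phi> b \<in> span (\<Phi> ` (I - {b}))" using ab by (intro span_base) (auto intro: image_eqI[of _ _ a])
        then show False using indep[OF IK(1) _ ab(2)] IK(2) by simp
      qed
    qed
    have indI: "independent (\<Phi> ` I)"
      unfolding dependent_def
    proof
      assume "\<exists>a\<in>\<Phi> ` I. a \<in> span (\<Phi> ` I - {a})"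
      then obtain k where k: "k \<in> I" "\<Phi> k \<in> span (\<Phi> ` I - {\<Phi> k})" by blast
      have "\<Phi> ` I - {\<Phi> k} \<subseteq> \<Phi> ` (I - {k})" by auto
      then have "\<Phi> k \<in> span (\<Phi> ` (I - {k}))" using k(2) span_mono by blast
      then show False using indep[OF IK(1) _ k(1)] IK(2) by simp
    qed
    have dimPhi: "dim (\<Phi> ` I) = S"
    proof -
      have "dim (\<Phi> ` I) = dim (span (\<Phi> ` I))" by simp
      also have "\<dots> = card (\<Phi> ` I)" by (rule dim_span_eq_card_independent[OF indI])
      also have "\<dots> = S" using card_image[OF injI] IK(2) by simp
      finally show ?thesis .
    qed
    have dimPsi: "dim (\<Psi> ` I) \<le> S"
    proof -
      have "dim (\<Psi> ` I) \<le> card (\<Psi> ` I)" by (rule dim_le_card) (use fI in \<open>auto intro: span_base\<close>)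
      also have "\<dots> \<le> card I" using fI by (rule card_image_le)
      finally show ?thesis using IK(2) by simp
    qed
    have sums: "sum (gv \<Psi> I) {1..K} \<le> sum (gv \<Phi> I) {1..K}"
    proof -
      have "sum (gv \<Psi> I) {1..K} = A * dim (\<Psi> ` I)" unfolding gv_def by (rule trace_frame[OF F])
      also have "\<dots> \<le> A * dim (\<Phi> ` I)" using dimPsi dimPhi A0 by (simp add: mult_left_mono)
      also have "\<dots> = sum (gv \<Phi> I) {1..K}" unfolding gv_def by (rule trace_frame[OF F, symmetric])
      finally show ?thesis .
    qed
    have "(\<Sum>i=1..K. W i * gv \<Psi> I i) \<le> (\<Sum>i=1..K. W i * gv \<Phi> I i)"
      by (rule weight_ineq[OF _ IK(1) b0 _ bconst sums]) (use ble g1 g2 IK(1) in auto)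
    then show ?thesis unfolding hW .
  qed
  have tot_le: "Tot \<Psi> \<le> Tot \<Phi>" for \<Psi>
    unfolding tot_eq grp by (intro mult_left_mono sum_mono grp_le) auto
  have Mset: "{(norm (P I \<Psi> (synth K \<Phi> (c_ps c p \<sigma>))))\<^sup>2 | I. I \<subseteq> {1..K} \<and> card I \<le> S}
      = (\<lambda>I. (norm (proj_span (\<Psi> ` I) (y p \<sigma>)))\<^sup>2) ` Is" for \<Psi> p \<sigma>
    unfolding Is_def P_def y_def by auto
  have IpIs: "Ip p \<in> Is" if "p \<in> perms K" for p using Ip_sub Ip_card[OF that] unfolding Is_def by auto
  have objPhi: "objective K S \<Phi> c \<Phi> = (1 / (2 ^ K * fact K)) * Tot \<Phi>"
  proof -
    have "Max {(norm (P I \<Phi> (synth K \<Phi> (c_ps c p \<sigma>))))\<^sup>2 | I. I \<subseteq> {1..K} \<and> card I \<le> S}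
        = (norm (proj_span (\<Phi> ` Ip p) (y p \<sigma>)))\<^sup>2" if p: "p \<in> perms K" and \<sigma>: "\<sigma> \<in> signs K" for p \<sigma>
      unfolding Mset
    proof (rule Max_eqI)
      show "finite ((\<lambda>I. (norm (proj_span (\<Phi> ` I) (y p \<sigma>)))\<^sup>2) ` Is)" using fIs by simp
      show "(norm (proj_span (\<Phi> ` Ip p) (y p \<sigma>)))\<^sup>2 \<in> (\<lambda>I. (norm (proj_span (\<Phi> ` I) (y p \<sigma>)))\<^sup>2) ` Is"
        using IpIs[OF p] by blast
      fix v assume "v \<in> (\<lambda>I. (norm (proj_span (\<Phi> ` I) (y p \<sigma>)))\<^sup>2) ` Is"
      then obtain I where I: "I \<in> Is" "v = (norm (proj_span (\<Phi> ` I) (y p \<sigma>)))\<^sup>2" by blast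
      have "norm (proj_span (\<Phi> ` I) (y p \<sigma>)) \<le> norm (proj_span (\<Phi> ` Ip p) (y p \<sigma>))"
      proof (cases "I = Ip p")
        case False
        then show ?thesis using gap[OF p \<sigma>, of I] I(1) unfolding Is_def Ip_def P_def y_def by fastforce
      qed simp
      then show "v \<le> (norm (proj_span (\<Phi> ` Ip p) (y p \<sigma>)))\<^sup>2" unfolding I(2)
        by (rule power_mono) simp
    qed
    then show ?thesis unfolding objective_def Tot_def by simp
  qed
  have objPsi: "objective K S \<Phi> c \<Psi> \<le> (1 / (2 ^ K * fact K)) * Tot \<Psi>"
    if H: "\<forall>p\<in>perms K. \<forall>\<sigma>\<in>signs K. \<forall>I\<in>Is.
      norm (proj_span (\<Psi> ` I) (y p \<sigma>)) \<le> norm (proj_span (\<Psi> ` Ip p) (y p \<sigma>))" for \<Psi>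
  proof -
    have "Max {(norm (P I \<Psi> (synth K \<Phi> (c_ps c p \<sigma>))))\<^sup>2 | I. I \<subseteq> {1..K} \<and> card I \<le> S}
        \<le> (norm (proj_span (\<Psi> ` Ip p) (y p \<sigma>)))\<^sup>2" if p: "p \<in> perms K" and \<sigma>: "\<sigma> \<in> signs K" for p \<sigma>
      unfolding Mset
    proof (rule Max.boundedI)
      show "finite ((\<lambda>I. (norm (proj_span (\<Psi> ` I) (y p \<sigma>)))\<^sup>2) ` Is)" using fIs by simp
      show "(\<lambda>I. (norm (proj_span (\<Psi> ` I) (y p \<sigma>)))\<^sup>2) ` Is \<noteq> {}" using IpIs[OF p] by blast
      fix v assume "v \<in> (\<lambda>I. (norm (proj_span (\<Psi> ` I) (y p \<sigma>)))\<^sup>2) ` Is"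
      then obtain I where I: "I \<in> Is" "v = (norm (proj_span (\<Psi> ` I) (y p \<sigma>)))\<^sup>2" by blast
      show "v \<le> (norm (proj_span (\<Psi> ` Ip p) (y p \<sigma>)))\<^sup>2" unfolding I(2)
        by (rule power_mono) (use H p \<sigma> I(1) in auto)
    qed
    then show ?thesis unfolding objective_def Tot_def
      by (intro mult_left_mono sum_mono) auto
  qed
  from ev obtain e where e: "e > 0" and eH: "\<And>\<Psi>. (\<forall>i\<in>{1..K}. norm (\<Psi> i - \<Phi> i) < e) \<Longrightarrow>
      \<forall>p\<in>perms K. \<forall>\<sigma>\<in>signs K. \<forall>I\<in>Is.
      norm (proj_span (\<Psi> ` I) (y p \<sigma>)) \<le> norm (proj_span (\<Psi> ` Ip p) (y p \<sigma>))"
    unfolding eventually_nbhd by blast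
  have "objective K S \<Phi> c \<Psi> \<le> objective K S \<Phi> c \<Phi>"
    if "is_dict K \<Psi> \<and> (\<forall>i\<in>{1..K}. norm (\<Psi> i - \<Phi> i) < e)" for \<Psi>
  proof -
    have "objective K S \<Phi> c \<Psi> \<le> (1 / (2 ^ K * fact K)) * Tot \<Psi>" using objPsi eH that by blast
    also have "\<dots> \<le> (1 / (2 ^ K * fact K)) * Tot \<Phi>" by (intro mult_left_mono tot_le) simp
    also have "\<dots> = objective K S \<Phi> c \<Phi>" using objPhi by simp
    finally show ?thesis .
  qed
  then show ?thesis unfolding local_max_on_dicts_def using dict e by blast
qed


end
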